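(* Consider on the $\mathbb{Z}^2$ graph the system ($m\mathcal{H}1$) $$u_2=v+t\frac{p-q}{s-t},\qquad v_1=u+s\frac{p-q}{s-t},\qquad s_2=\frac{1}{t}+\frac{p-q}{t(u-v)},\qquad t_1=\frac{1}{s}+\frac{p-q}{s(u-v)}.$$ This bond system corresponds to the vertex system ($d$-$H2$) $$2(z_{12}-z)(x_2-x_1)+(p-q)(x_1+x_2)=0,\qquad 2(x_{12}-x)(z_2-z_1)+(p-q)(x_{12}+x)=0,$$ in the sense that, writing $s=x_1/x$, $t=x_2/x$, $u=z_1+z-\frac{p}{2}$, $v=z_2+z-\frac{q}{2}$ with potential functions $x,z$ on the vertices, the system $m\mathcal{H}1$ becomes exactly $d$-$H2$; moreover the vertex system $d$-$H2$ is 3D-compatible.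
   Context: $u,s$ are functions on horizontal edges $\{(m,n),(m+1,n)\}$ and $v,t$ on vertical edges $\{(m,n),(m,n+1)\}$ of the $\mathbb{Z}^2$ graph; for a square with lower-left vertex $(m,n)$, $u,s$ sit on the bottom edge, $v,t$ on the left edge, $u_2,s_2$ on the top edge, $v_1,t_1$ on the right edge; $p$ depends only on $m$, $q$ only on $n$. For vertex functions, $x=x_{m,n}$, $x_1=x_{m+1,n}$, $x_2=x_{m,n+1}$, $x_{12}=x_{m+1,n+1}$, and similarly for $z$. A two-component vertex system on $\mathbb{Z}^2$ is 3D-compatible if, when it is imposed on every face of a cube in $\mathbb{Z}^3$ (with lattice parameters $p_1,p_2,p_3$ attached to the three directions), the values $(x_{123},z_{123})$ at the vertex opposite to the origin computed in the three possible ways coincide. *)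

theory Defs
  imports Main
begin

text \<open>The bond system mH1 on one square: u, s on the bottom edge, v, t on the left edge,
  u2, s2 on the top edge, v1, t1 on the right edge; p, q the lattice parameters.\<close>
definition mH1 :: "'a::field \<Rightarrow> 'a \<Rightarrow> 'a \<Rightarrow> 'a \<Rightarrow> 'a \<Rightarrow> 'a \<Rightarrow> 'a \<Rightarrow> 'a \<Rightarrow> 'a \<Rightarrow> 'a \<Rightarrow> bool" where
  "mH1 p q u v s t u2 v1 s2 t1 \<longleftrightarrow>
     u2 = v + t * (p - q) / (s - t) \<and>
     v1 = u + s * (p - q) / (s - t) \<and>
     s2 = 1 / t + (p - q) / (t * (u - v)) \<and>
     t1 = 1 / s + (p - q) / (s * (u - v))"

definition dH2 :: "'a::field \<Rightarrow> 'a \<Rightarrow> 'a \<Rightarrow> 'a \<Rightarrow> 'a \<Rightarrow> 'a \<Rightarrow> 'a \<Rightarrow> 'a \<Rightarrow> 'a \<Rightarrow> 'a \<Rightarrow> bool" where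
  "dH2 p q x x1 x2 x12 z z1 z2 z12 \<longleftrightarrow>
     2 * (z12 - z) * (x2 - x1) + (p - q) * (x1 + x2) = 0 \<and>
     2 * (x12 - x) * (z2 - z1) + (p - q) * (x12 + x) = 0"

text \<open>A two-component vertex system Q p q x x1 x2 x12 z z1 z2 z12.
  (X, Z) is the value at the fourth vertex computed from the face, i.e. the unique solution.\<close>
definition face_sol :: "('a \<Rightarrow> 'a \<Rightarrow> 'a \<Rightarrow> 'a \<Rightarrow> 'a \<Rightarrow> 'a \<Rightarrow> 'a \<Rightarrow> 'a \<Rightarrow> 'a \<Rightarrow> 'a \<Rightarrow> bool)
    \<Rightarrow> 'a \<Rightarrow> 'a \<Rightarrow> 'a \<Rightarrow> 'a \<Rightarrow> 'a \<Rightarrow> 'a \<Rightarrow> 'a \<Rightarrow> 'a \<Rightarrow> 'a \<Rightarrow> 'a \<Rightarrow> bool" where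
  "face_sol Q p q x x1 x2 z z1 z2 X Z \<longleftrightarrow>
     Q p q x x1 x2 X z z1 z2 Z \<and>
     (\<forall>X' Z'. Q p q x x1 x2 X' z z1 z2 Z' \<longrightarrow> X' = X \<and> Z' = Z)"

text \<open>3D-compatibility: impose Q on every face of a cube (parameters p1 p2 p3 for the three
  directions); whenever all face computations are well defined, the three values of
  (x123, z123) coincide.\<close>
definition three_d_compatible ::
    "('a \<Rightarrow> 'a \<Rightarrow> 'a \<Rightarrow> 'a \<Rightarrow> 'a \<Rightarrow> 'a \<Rightarrow> 'a \<Rightarrow> 'a \<Rightarrow> 'a \<Rightarrow> 'a \<Rightarrow> bool) \<Rightarrow> bool" where
  "three_d_compatible Q \<longleftrightarrow>
     (\<forall>p1 p2 p3 x x1 x2 x3 z z1 z2 z3 x12 x13 x23 z12 z13 z23 a1 b1 a2 b2 a3 b3.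
        face_sol Q p1 p2 x x1 x2 z z1 z2 x12 z12 \<and>
        face_sol Q p1 p3 x x1 x3 z z1 z3 x13 z13 \<and>
        face_sol Q p2 p3 x x2 x3 z z2 z3 x23 z23 \<and>
        face_sol Q p1 p2 x3 x13 x23 z3 z13 z23 a1 b1 \<and>
        face_sol Q p1 p3 x2 x12 x23 z2 z12 z23 a2 b2 \<and>
        face_sol Q p2 p3 x1 x12 x13 z1 z12 z13 a3 b3
        \<longrightarrow> a1 = a2 \<and> a2 = a3 \<and> b1 = b2 \<and> b2 = b3)"

end

theory Submission imports Defs begin

lemma fs:
  fixes x :: "'a::field_char_0"
  assumes "face_sol dH2 p q x x1 x2 z z1 z2 X Z"
  shows "x1 \<noteq> x2 \<and> 2*(z2-z1)+(p-q) \<noteq> 0 \<and> Z = z + (p-q)*(x1+x2)/(2*(x1-x2))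
        \<and> X = x*(2*(z2-z1)-(p-q))/(2*(z2-z1)+(p-q))"
proof -
  have e: "dH2 p q x x1 x2 X z z1 z2 Z" and u: "\<And>X' Z'. dH2 p q x x1 x2 X' z z1 z2 Z' \<Longrightarrow> X' = X \<and> Z' = Z"
    using assms unfolding face_sol_def by blast+
  have e1: "2 * (Z - z) * (x2 - x1) + (p - q) * (x1 + x2) = 0" and e2: "2 * (X - x) * (z2 - z1) + (p - q) * (X + x) = 0"
    using e unfolding dH2_def by auto
  have n1: "x1 \<noteq> x2"
  proof
    assume h: "x1 = x2"
    have "dH2 p q x x1 x2 X z z1 z2 (Z+1)" using e1 e2 h unfolding dH2_def by simp
    from u[OF this] show False by simp
  qed
  have n2: "2*(z2-z1)+(p-q) \<noteq> 0"
  proof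
    assume h: "2*(z2-z1)+(p-q) = 0"
    have "2 * (X + 1 - x) * (z2 - z1) + (p - q) * (X + 1 + x) = 0"
      using e2 h by (simp add: algebra_simps)
    then have "dH2 p q x x1 x2 (X+1) z z1 z2 Z" using e1 unfolding dH2_def by simp
    from u[OF this] show False by simp
  qed
  have "Z = z + (p-q)*(x1+x2)/(2*(x1-x2))" using n1 e1 by (simp add: field_simps)
  moreover have "X = x*(2*(z2-z1)-(p-q))/(2*(z2-z1)+(p-q))" using n2 e2 by (simp add: field_simps)
  ultimately show ?thesis using n1 n2 by blast
qed

lemma a_gen:
  fixes xk :: "'a::field_char_0"
  assumes zik: "zik = z + (pi-pk)*(xi+xk)/(2*(xi-xk))"
      and zjk: "zjk = z + (pj-pk)*(xj+xk)/(2*(xj-xk))"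
      and n1: "xi \<noteq> xk" and n2: "xj \<noteq> xk"
      and c: "2*(zjk-zik)+(pi-pj) \<noteq> 0"
      and a: "a = xk*(2*(zjk-zik)-(pi-pj))/(2*(zjk-zik)+(pi-pj))"
  shows "(pj-pk)*(xi-xk) - (pi-pk)*(xj-xk) \<noteq> 0 \<and>
         a = ((pj-pk)*xj*(xi-xk) - (pi-pk)*xi*(xj-xk)) / ((pj-pk)*(xi-xk) - (pi-pk)*(xj-xk))"
proof -
  define W1 where "W1 = 2*(zjk-zik)+(pi-pj)"
  define W2 where "W2 = 2*(zjk-zik)-(pi-pj)"
  define P where "P = (xj-xk)*(xi-xk)"
  define D where "D = (pj-pk)*(xi-xk) - (pi-pk)*(xj-xk)"
  define N where "N = (pj-pk)*xj*(xi-xk) - (pi-pk)*xi*(xj-xk)"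
  have s1: "xi - xk \<noteq> 0" "xj - xk \<noteq> 0" using n1 n2 by auto
  have P0: "P \<noteq> 0" unfolding P_def using s1 by simp
  define Q1 where "Q1 = (pi-pk)*(xi+xk)/(xi-xk)"
  define Q2 where "Q2 = (pj-pk)*(xj+xk)/(xj-xk)"
  have q1: "Q1*(xi-xk) = (pi-pk)*(xi+xk)" unfolding Q1_def using s1 by simp
  have q2: "Q2*(xj-xk) = (pj-pk)*(xj+xk)" unfolding Q2_def using s1 by simp
  have z1: "zik = z + Q1/2" unfolding zik Q1_def by (simp add: mult.commute)
  have z2: "zjk = z + Q2/2" unfolding zjk Q2_def by (simp add: mult.commute)
  have zz: "2*(zjk-zik) = Q2 - Q1" unfolding z1 z2 by (simp add: algebra_simps)
  have e1: "W1 * P = Q2*(xj-xk)*(xi-xk) - Q1*(xi-xk)*(xj-xk) + (pi-pj)*P"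
    unfolding W1_def zz P_def by (simp add: algebra_simps)
  have h1: "W1 * P = 2*xk*D" unfolding e1 q1 q2 unfolding P_def D_def by (simp add: algebra_simps)?
  have e2: "W2 * P = Q2*(xj-xk)*(xi-xk) - Q1*(xi-xk)*(xj-xk) - (pi-pj)*P"
    unfolding W2_def zz P_def by (simp add: algebra_simps)
  have h2: "W2 * P = 2*N" unfolding e2 q1 q2 unfolding P_def N_def by (simp add: algebra_simps)?
  have W10: "W1 \<noteq> 0" using c W1_def by simp
  have d: "D \<noteq> 0" and xk: "xk \<noteq> 0" using W10 P0 h1 by auto
  have "a * W1 = xk * W2" using a W10 unfolding W1_def W2_def by simp
  then have "a * W1 * P = xk * W2 * P" by simp
  then have "a * (2*xk*D) = xk * (2*N)" using h1 h2 by (simp add: mult.assoc)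
  then have "a * D = N" using xk by (simp add: algebra_simps)
  then show ?thesis using d unfolding D_def N_def by (simp add: field_simps)
qed

lemma b_gen:
  fixes x :: "'a::field_char_0"
  assumes xik: "xik = x*(2*(zk-zi)-(pi-pk))/(2*(zk-zi)+(pi-pk))"
      and xjk: "xjk = x*(2*(zk-zj)-(pj-pk))/(2*(zk-zj)+(pj-pk))"
      and c1: "2*(zk-zi)+(pi-pk) \<noteq> 0" and c2: "2*(zk-zj)+(pj-pk) \<noteq> 0"
      and n: "xik \<noteq> xjk"
      and b: "b = zk + (pi-pj)*(xik+xjk)/(2*(xik-xjk))"
  shows "(2*(zk-zi)-(pi-pk))*(2*(zk-zj)+(pj-pk)) - (2*(zk-zj)-(pj-pk))*(2*(zk-zi)+(pi-pk)) \<noteq> 0 \<and>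
         b = zk + (pi-pj)*((2*(zk-zi)-(pi-pk))*(2*(zk-zj)+(pj-pk)) + (2*(zk-zj)-(pj-pk))*(2*(zk-zi)+(pi-pk)))
              / (2*((2*(zk-zi)-(pi-pk))*(2*(zk-zj)+(pj-pk)) - (2*(zk-zj)-(pj-pk))*(2*(zk-zi)+(pi-pk))))"
proof -
  define Ai where "Ai = 2*(zk-zi)-(pi-pk)"
  define Bi where "Bi = 2*(zk-zi)+(pi-pk)"
  define Aj where "Aj = 2*(zk-zj)-(pj-pk)"
  define Bj where "Bj = 2*(zk-zj)+(pj-pk)"
  have c1': "Bi \<noteq> 0" and c2': "Bj \<noteq> 0" using c1 c2 Bi_def Bj_def by auto
  have xik': "xik = x*Ai/Bi" using xik Ai_def Bi_def by simp
  have xjk': "xjk = x*Aj/Bj" using xjk Aj_def Bj_def by simp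
  have h1: "xik - xjk = x*(Ai*Bj - Aj*Bi)/(Bi*Bj)" unfolding xik' xjk' using c1' c2' by (simp add: field_simps)
  have h2: "xik + xjk = x*(Ai*Bj + Aj*Bi)/(Bi*Bj)" unfolding xik' xjk' using c1' c2' by (simp add: field_simps)
  have d: "Ai*Bj - Aj*Bi \<noteq> 0" and x: "x \<noteq> 0" using n h1 by auto
  have "(xik+xjk)/(xik-xjk) = (Ai*Bj + Aj*Bi)/(Ai*Bj - Aj*Bi)"
    unfolding h1 h2 using c1' c2' x d by simp
  moreover have "b = zk + (pi-pj)*((xik+xjk)/(xik-xjk))/2" using b by simp
  ultimately have "b = zk + (pi-pj)*((Ai*Bj + Aj*Bi)/(Ai*Bj - Aj*Bi))/2" by simp
  then show ?thesis using d unfolding Ai_def Bi_def Aj_def Bj_def by (simp add: field_simps)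
qed

lemma iffz:
  fixes L :: "'a::field"
  assumes "L - R = E / c" "c \<noteq> 0"
  shows "L = R \<longleftrightarrow> E = 0"
  using assms by (metis divide_eq_0_iff eq_iff_diff_eq_0)

lemma E3gen:
  fixes x :: "'a::field_char_0"
  assumes "x \<noteq> 0" "x2 \<noteq> 0" "w - d \<noteq> 0"
  shows "x12/x2 - (1/(x2/x) + d / ((x2/x) * ((w - d)/2))) = (-((x12 - x)*w - d*(x12+x))) / (-x2*(w-d))"
  using assms by (simp add: field_simps)

lemma part1:
  fixes x :: "'a::field_char_0"
  assumes x0: "x \<noteq> 0" and x10: "x1 \<noteq> 0" and x20: "x2 \<noteq> 0" and st: "x1/x \<noteq> x2/x"
    and uv: "z1 + z - p/2 \<noteq> z2 + z - q/2"
  shows "mH1 p q (z1 + z - p/2) (z2 + z - q/2) (x1/x) (x2/x) (z12 + z2 - p/2) (z12 + z1 - q/2) (x12/x2) (x12/x1)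
     \<longleftrightarrow> dH2 p q x x1 x2 x12 z z1 z2 z12"
proof -
  have d: "x1 - x2 \<noteq> 0" using st by auto
  have uv': "(z1 + z - p/2) - (z2 + z - q/2) = (2*(z1 - z2) - (p - q))/2" by (simp add: field_simps)
  have d2: "2*(z1 - z2) - (p - q) \<noteq> 0"
  proof
    assume h: "2*(z1 - z2) - (p - q) = 0"
    then have "(z1 + z - p/2) - (z2 + z - q/2) = 0" using uv' by simp
    then have "z1 + z - p/2 = z2 + z - q/2" by (rule right_minus_eq[THEN iffD1])
    with uv show False by blast
  qed
  have E1: "z12 + z2 - p/2 = z2 + z - q/2 + (x2/x) * (p - q) / (x1/x - x2/x) \<longleftrightarrow>
        2 * (z12 - z) * (x2 - x1) + (p - q) * (x1 + x2) = 0"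
  proof -
    have "x1/x - x2/x = (x1-x2)/x" by (simp add: diff_divide_distrib)
    then have r: "(x2/x) * (p - q) / (x1/x - x2/x) = x2*(p-q)/(x1-x2)" using x0 d by simp
    show ?thesis unfolding r
      by (rule iffz[where c="-2*(x1-x2)"]) (use d in \<open>simp_all add: field_simps\<close>)
  qed
  have E2: "z12 + z1 - q/2 = z1 + z - p/2 + (x1/x) * (p - q) / (x1/x - x2/x) \<longleftrightarrow>
        2 * (z12 - z) * (x2 - x1) + (p - q) * (x1 + x2) = 0"
  proof -
    have "x1/x - x2/x = (x1-x2)/x" by (simp add: diff_divide_distrib)
    then have r: "(x1/x) * (p - q) / (x1/x - x2/x) = x1*(p-q)/(x1-x2)" using x0 d by simp
    show ?thesis unfolding r
      by (rule iffz[where c="-2*(x1-x2)"]) (use d in \<open>simp_all add: field_simps\<close>)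
  qed
  have E3: "x12/x2 = 1/(x2/x) + (p - q) / ((x2/x) * ((z1 + z - p/2) - (z2 + z - q/2))) \<longleftrightarrow>
        2 * (x12 - x) * (z2 - z1) + (p - q) * (x12 + x) = 0"
  proof -
    have c0: "-x2*(2*(z1 - z2) - (p - q)) \<noteq> 0" using x20 d2 by simp
    have ee: "-((x12 - x)*(2*(z1 - z2)) - (p - q)*(x12+x)) = 2 * (x12 - x) * (z2 - z1) + (p - q) * (x12 + x)"
      by (simp add: algebra_simps)
    show ?thesis unfolding uv' ee[symmetric] by (rule iffz[OF E3gen[OF x0 x20 d2] c0])
  qed
  have E4: "x12/x1 = 1/(x1/x) + (p - q) / ((x1/x) * ((z1 + z - p/2) - (z2 + z - q/2))) \<longleftrightarrow>
        2 * (x12 - x) * (z2 - z1) + (p - q) * (x12 + x) = 0"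
  proof -
    have c0: "-x1*(2*(z1 - z2) - (p - q)) \<noteq> 0" using x10 d2 by simp
    have ee: "-((x12 - x)*(2*(z1 - z2)) - (p - q)*(x12+x)) = 2 * (x12 - x) * (z2 - z1) + (p - q) * (x12 + x)"
      by (simp add: algebra_simps)
    show ?thesis unfolding uv' ee[symmetric] by (rule iffz[OF E3gen[OF x0 x10 d2] c0])
  qed
  show ?thesis unfolding mH1_def dH2_def using E1 E2 E3 E4 by blast
qed

lemma swz:
  fixes a :: "'a::field_char_0"
  shows "(a-b)*(c+d)/(2*(c-d)) = (b-a)*(d+c)/(2*(d-c))"
  by (cases "c = d") (simp_all add: field_simps)

lemma swx:
  fixes a :: "'a::field_char_0"
  shows "x*(2*(a-b)-(c-d))/(2*(a-b)+(c-d)) = x*(2*(b-a)-(d-c))/(2*(b-a)+(d-c))"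
  by (cases "2*(a-b)+(c-d) = 0") (simp_all add: field_simps)

lemma afin:
  fixes x1 :: "'a::field_char_0"
  assumes "(p2-p3)*(x1-x3) - (p1-p3)*(x2-x3) \<noteq> 0" "(p3-p2)*(x1-x2) - (p1-p2)*(x3-x2) \<noteq> 0"
    "(p3-p1)*(x2-x1) - (p2-p1)*(x3-x1) \<noteq> 0"
  shows "((p2-p3)*x2*(x1-x3) - (p1-p3)*x1*(x2-x3)) / ((p2-p3)*(x1-x3) - (p1-p3)*(x2-x3))
       = ((p3-p2)*x3*(x1-x2) - (p1-p2)*x1*(x3-x2)) / ((p3-p2)*(x1-x2) - (p1-p2)*(x3-x2))
     \<and> ((p3-p2)*x3*(x1-x2) - (p1-p2)*x1*(x3-x2)) / ((p3-p2)*(x1-x2) - (p1-p2)*(x3-x2))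
       = ((p3-p1)*x3*(x2-x1) - (p2-p1)*x2*(x3-x1)) / ((p3-p1)*(x2-x1) - (p2-p1)*(x3-x1))"
  using assms by (simp add: frac_eq_eq algebra_simps)

lemma eqfrac:
  fixes z :: "'a::field"
  assumes "c \<noteq> 0" "c' \<noteq> 0" "(z*c + n)*c' = (z'*c' + n')*c"
  shows "z + n/c = z' + n'/c'"
proof -
  have "z + n/c = (z*c+n)/c" using assms(1) by (simp add: field_simps)
  moreover have "z' + n'/c' = (z'*c'+n')/c'" using assms(2) by (simp add: field_simps)
  ultimately show ?thesis using assms by (simp add: frac_eq_eq)
qed

lemma bfin:
  fixes z1 :: "'a::field_char_0"
  assumes "((2*(z3-z1)-(p1-p3))*(2*(z3-z2)+(p2-p3)) - (2*(z3-z2)-(p2-p3))*(2*(z3-z1)+(p1-p3))) \<noteq> 0" "((2*(z2-z1)-(p1-p2))*(2*(z2-z3)+(p3-p2)) - (2*(z2-z3)-(p3-p2))*(2*(z2-z1)+(p1-p2))) \<noteq> 0" "((2*(z1-z2)-(p2-p1))*(2*(z1-z3)+(p3-p1)) - (2*(z1-z3)-(p3-p1))*(2*(z1-z2)+(p2-p1))) \<noteq> 0"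
  shows "z3 + (p1-p2)*((2*(z3-z1)-(p1-p3))*(2*(z3-z2)+(p2-p3)) + (2*(z3-z2)-(p2-p3))*(2*(z3-z1)+(p1-p3)))/(2*((2*(z3-z1)-(p1-p3))*(2*(z3-z2)+(p2-p3)) - (2*(z3-z2)-(p2-p3))*(2*(z3-z1)+(p1-p3)))) = z2 + (p1-p3)*((2*(z2-z1)-(p1-p2))*(2*(z2-z3)+(p3-p2)) + (2*(z2-z3)-(p3-p2))*(2*(z2-z1)+(p1-p2)))/(2*((2*(z2-z1)-(p1-p2))*(2*(z2-z3)+(p3-p2)) - (2*(z2-z3)-(p3-p2))*(2*(z2-z1)+(p1-p2)))) \<and> z2 + (p1-p3)*((2*(z2-z1)-(p1-p2))*(2*(z2-z3)+(p3-p2)) + (2*(z2-z3)-(p3-p2))*(2*(z2-z1)+(p1-p2)))/(2*((2*(z2-z1)-(p1-p2))*(2*(z2-z3)+(p3-p2)) - (2*(z2-z3)-(p3-p2))*(2*(z2-z1)+(p1-p2)))) = z1 + (p2-p3)*((2*(z1-z2)-(p2-p1))*(2*(z1-z3)+(p3-p1)) + (2*(z1-z3)-(p3-p1))*(2*(z1-z2)+(p2-p1)))/(2*((2*(z1-z2)-(p2-p1))*(2*(z1-z3)+(p3-p1)) - (2*(z1-z3)-(p3-p1))*(2*(z1-z2)+(p2-p1))))"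
  apply (rule conjI)
   apply (rule eqfrac) using assms apply simp_all
   apply (simp add: algebra_simps)
  apply (rule eqfrac) using assms apply simp_all
  apply (simp add: algebra_simps)
  done


theorem proposition3p3:
  fixes x z :: "int \<Rightarrow> int \<Rightarrow> 'a::field_char_0"
    and p q :: "int \<Rightarrow> 'a"
  defines "s \<equiv> \<lambda>m n. x (m + 1) n / x m n"
      and "t \<equiv> \<lambda>m n. x m (n + 1) / x m n"
      and "u \<equiv> \<lambda>m n. z (m + 1) n + z m n - p m / 2"
      and "v \<equiv> \<lambda>m n. z m (n + 1) + z m n - q n / 2"
  shows "(\<forall>m n. x m n \<noteq> 0 \<and> s m n \<noteq> 0 \<and> t m n \<noteq> 0 \<and> s m n \<noteq> t m n \<and> u m n \<noteq> v m n \<longrightarrow>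
            (mH1 (p m) (q n) (u m n) (v m n) (s m n) (t m n)
                 (u m (n + 1)) (v (m + 1) n) (s m (n + 1)) (t (m + 1) n)
             \<longleftrightarrow> dH2 (p m) (q n) (x m n) (x (m + 1) n) (x m (n + 1)) (x (m + 1) (n + 1))
                    (z m n) (z (m + 1) n) (z m (n + 1)) (z (m + 1) (n + 1))))
         \<and> three_d_compatible (dH2 :: 'a \<Rightarrow> _)"
proof
  show "\<forall>m n. x m n \<noteq> 0 \<and> s m n \<noteq> 0 \<and> t m n \<noteq> 0 \<and> s m n \<noteq> t m n \<and> u m n \<noteq> v m n \<longrightarrow>
            (mH1 (p m) (q n) (u m n) (v m n) (s m n) (t m n)
                 (u m (n + 1)) (v (m + 1) n) (s m (n + 1)) (t (m + 1) n)
             \<longleftrightarrow> dH2 (p m) (q n) (x m n) (x (m + 1) n) (x m (n + 1)) (x (m + 1) (n + 1))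
                    (z m n) (z (m + 1) n) (z m (n + 1)) (z (m + 1) (n + 1)))"
  proof (intro allI impI)
    fix m n
    assume H: "x m n \<noteq> 0 \<and> s m n \<noteq> 0 \<and> t m n \<noteq> 0 \<and> s m n \<noteq> t m n \<and> u m n \<noteq> v m n"
    have h0: "x m n \<noteq> 0" using H by blast
    have h1: "x (m+1) n \<noteq> 0" using H unfolding s_def by auto
    have h2: "x m (n+1) \<noteq> 0" using H unfolding t_def by auto
    have h3: "x (m+1) n / x m n \<noteq> x m (n+1) / x m n" using H unfolding s_def t_def by auto
    have h4: "z (m + 1) n + z m n - p m / 2 \<noteq> z m (n + 1) + z m n - q n / 2" using H unfolding u_def v_def by auto
    show "mH1 (p m) (q n) (u m n) (v m n) (s m n) (t m n)
                 (u m (n + 1)) (v (m + 1) n) (s m (n + 1)) (t (m + 1) n)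
             \<longleftrightarrow> dH2 (p m) (q n) (x m n) (x (m + 1) n) (x m (n + 1)) (x (m + 1) (n + 1))
                    (z m n) (z (m + 1) n) (z m (n + 1)) (z (m + 1) (n + 1))"
      unfolding s_def t_def u_def v_def by (rule part1[OF h0 h1 h2 h3 h4])
  qed
next
  show "three_d_compatible (dH2 :: 'a \<Rightarrow> _)"
    unfolding three_d_compatible_def
  proof (intro allI impI)
    fix p1 p2 p3 x x1 x2 x3 z z1 z2 z3 x12 x13 x23 z12 z13 z23 a1 b1 a2 b2 a3 b3 :: 'a
    assume A: "face_sol dH2 p1 p2 x x1 x2 z z1 z2 x12 z12 \<and>
        face_sol dH2 p1 p3 x x1 x3 z z1 z3 x13 z13 \<and>
        face_sol dH2 p2 p3 x x2 x3 z z2 z3 x23 z23 \<and>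
        face_sol dH2 p1 p2 x3 x13 x23 z3 z13 z23 a1 b1 \<and>
        face_sol dH2 p1 p3 x2 x12 x23 z2 z12 z23 a2 b2 \<and>
        face_sol dH2 p2 p3 x1 x12 x13 z1 z12 z13 a3 b3"
    note F1 = fs[OF A[THEN conjunct1]]
    note F2 = fs[OF A[THEN conjunct2, THEN conjunct1]]
    note F3 = fs[OF A[THEN conjunct2, THEN conjunct2, THEN conjunct1]]
    note F4 = fs[OF A[THEN conjunct2, THEN conjunct2, THEN conjunct2, THEN conjunct1]]
    note F5 = fs[OF A[THEN conjunct2, THEN conjunct2, THEN conjunct2, THEN conjunct2, THEN conjunct1]]
    note F6 = fs[OF A[THEN conjunct2, THEN conjunct2, THEN conjunct2, THEN conjunct2, THEN conjunct2]]
    have z12': "z12 = z + (p2-p1)*(x2+x1)/(2*(x2-x1))" using F1 swz by metis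
    have z13': "z13 = z + (p3-p1)*(x3+x1)/(2*(x3-x1))" using F2 swz by metis
    have z23': "z23 = z + (p3-p2)*(x3+x2)/(2*(x3-x2))" using F3 swz by metis
    have x12': "x12 = x*(2*(z1-z2)-(p2-p1))/(2*(z1-z2)+(p2-p1))" using F1 swx by metis
    have x13': "x13 = x*(2*(z1-z3)-(p3-p1))/(2*(z1-z3)+(p3-p1))" using F2 swx by metis
    have x23': "x23 = x*(2*(z2-z3)-(p3-p2))/(2*(z2-z3)+(p3-p2))" using F3 swx by metis
    have c12: "2*(z1-z2)+(p2-p1) \<noteq> 0" using F1 by (auto simp: algebra_simps)
    have c13: "2*(z1-z3)+(p3-p1) \<noteq> 0" using F2 by (auto simp: algebra_simps)
    have c23: "2*(z2-z3)+(p3-p2) \<noteq> 0" using F3 by (auto simp: algebra_simps)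
    have n12: "x1 \<noteq> x2" and n13: "x1 \<noteq> x3" and n23: "x2 \<noteq> x3" using F1 F2 F3 by blast+
    note Ga1 = a_gen[OF F2[THEN conjunct2, THEN conjunct2, THEN conjunct1] F3[THEN conjunct2, THEN conjunct2, THEN conjunct1]
       n13 n23 F4[THEN conjunct2, THEN conjunct1] F4[THEN conjunct2, THEN conjunct2, THEN conjunct2]]
    note Ga2 = a_gen[OF F1[THEN conjunct2, THEN conjunct2, THEN conjunct1] z23'
       n12 n23[symmetric] F5[THEN conjunct2, THEN conjunct1] F5[THEN conjunct2, THEN conjunct2, THEN conjunct2]]
    note Ga3 = a_gen[OF z12' z13'
       n12[symmetric] n13[symmetric] F6[THEN conjunct2, THEN conjunct1] F6[THEN conjunct2, THEN conjunct2, THEN conjunct2]]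
    note Gb1 = b_gen[OF F2[THEN conjunct2, THEN conjunct2, THEN conjunct2] F3[THEN conjunct2, THEN conjunct2, THEN conjunct2]
       F2[THEN conjunct2, THEN conjunct1] F3[THEN conjunct2, THEN conjunct1] F4[THEN conjunct1] F4[THEN conjunct2, THEN conjunct2, THEN conjunct1]]
    note Gb2 = b_gen[OF F1[THEN conjunct2, THEN conjunct2, THEN conjunct2] x23'
       F1[THEN conjunct2, THEN conjunct1] c23 F5[THEN conjunct1] F5[THEN conjunct2, THEN conjunct2, THEN conjunct1]]
    note Gb3 = b_gen[OF x12' x13' c12 c13 F6[THEN conjunct1] F6[THEN conjunct2, THEN conjunct2, THEN conjunct1]]
    have "a1 = a2 \<and> a2 = a3" using afin[of p2 p3 x1 x3 p1 x2] Ga1 Ga2 Ga3 by simp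
    moreover have "b1 = b2 \<and> b2 = b3" using bfin[of z3 z1 p1 p3 z2 p2] Gb1 Gb2 Gb3 by simp
    ultimately show "a1 = a2 \<and> a2 = a3 \<and> b1 = b2 \<and> b2 = b3" by blast
  qed
qed
end
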